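(* Let $\chi:\mathcal H\to\mathcal H_L^\chi\otimes\mathcal H_R^\chi$ be a splitting map. The set $\mathrm{stloc}(\chi)$ of strictly $\chi$-local operators is a Von Neumann subalgebra of $\mathcal L(\mathcal H)$.
   Context: All Hilbert spaces are finite-dimensional and complex. A Von Neumann subalgebra of $\mathcal L(\mathcal H)$ is a $*$-subalgebra closed under adjoint and containing $\mathbb 1_{\mathcal H}$. A splitting map on $\mathcal H$ is an isometry $\chi:\mathcal H\to\mathcal H_L^\chi\otimes\mathcal H_R^\chi$. $A\in\mathcal L(\mathcal H)$ is strictly $\chi$-local if there exists $\tilde A\in\mathcal L(\mathcal H_L^\chi)$ with $A\chi^\dagger=\chi^\dagger(\tilde A\otimes\mathbb 1)$ and $\chi A=(\tilde A\otimes\mathbb 1)\chi$. *)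

theory Defs
  imports "HOL-Analysis.Analysis"
begin

text \<open>Finite-dimensional complex Hilbert spaces are modelled as coordinate spaces
  complex ^ 'n with 'n a finite index type; linear operators H -> K are matrices
  complex ^ 'n ^ 'k (rows indexed by the codomain). The tensor product
  H_L (x) H_R is complex ^ ('l \<times> 'r).\<close>

definition adj :: "complex ^ 'n ^ 'm \<Rightarrow> complex ^ 'm ^ 'n" where
  "adj A = (\<chi> i j. cnj (A $ j $ i))"

definition cscale :: "complex \<Rightarrow> complex ^ 'n ^ 'm \<Rightarrow> complex ^ 'n ^ 'm" where
  "cscale c A = (\<chi> i j. c * A $ i $ j)"

definition tensor_id :: "complex ^ 'l::finite ^ 'l \<Rightarrow> complex ^ ('l \<times> 'r::finite) ^ ('l \<times> 'r)" where
  "tensor_id A = (\<chi> p q. A $ fst p $ fst q * (if snd p = snd q then 1 else 0))"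

definition isometry :: "complex ^ 'n::finite ^ 'm::finite \<Rightarrow> bool" where
  "isometry V \<longleftrightarrow> adj V ** V = mat 1"

definition stloc :: "complex ^ 'n::finite ^ ('l::finite \<times> 'r::finite) \<Rightarrow> (complex ^ 'n ^ 'n) set" where
  "stloc chi = {A. \<exists>At :: complex ^ 'l ^ 'l.
       A ** adj chi = adj chi ** (tensor_id At :: complex ^ ('l \<times> 'r) ^ ('l \<times> 'r))
     \<and> chi ** A = tensor_id At ** chi}"

definition vN_subalgebra :: "(complex ^ 'n::finite ^ 'n) set \<Rightarrow> bool" where
  "vN_subalgebra S \<longleftrightarrow>
     mat 1 \<in> S
   \<and> (\<forall>A\<in>S. \<forall>B\<in>S. A + B \<in> S)
   \<and> (\<forall>c. \<forall>A\<in>S. cscale c A \<in> S)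
   \<and> (\<forall>A\<in>S. \<forall>B\<in>S. A ** B \<in> S)
   \<and> (\<forall>A\<in>S. adj A \<in> S)"

end

theory Submission
  imports Defs
begin

lemma adj_adj: "adj (adj A) = A"
  by (simp add: adj_def vec_eq_iff)

lemma adj_mult: "adj ((A::complex^'n::finite^'m) ** (B::complex^'k::finite^'n)) = adj B ** adj A"
  by (simp add: adj_def vec_eq_iff matrix_matrix_mult_def mult.commute)

lemma cscale_mult_left: "cscale c (A::complex^'n::finite^'m) ** (B::complex^'k::finite^'n) = cscale c (A ** B)"
  by (simp add: cscale_def vec_eq_iff matrix_matrix_mult_def sum_distrib_left mult.assoc)

lemma cscale_mult_right: "(A::complex^'n::finite^'m) ** cscale c (B::complex^'k::finite^'n) = cscale c (A ** B)"
  by (simp add: cscale_def vec_eq_iff matrix_matrix_mult_def sum_distrib_left mult.left_commute)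

lemma tensor_id_one: "(tensor_id (mat 1 :: complex^'l::finite^'l) :: complex^('l\<times>'r::finite)^('l\<times>'r)) = mat 1"
  by (simp add: tensor_id_def mat_def vec_eq_iff prod_eq_iff)

lemma tensor_id_add: "(tensor_id (A + B) :: complex^('l::finite\<times>'r::finite)^('l\<times>'r)) = tensor_id A + tensor_id B"
  by (simp add: tensor_id_def vec_eq_iff distrib_right)

lemma tensor_id_cscale: "(tensor_id (cscale c A) :: complex^('l::finite\<times>'r::finite)^('l\<times>'r)) = cscale c (tensor_id A)"
  by (simp add: tensor_id_def cscale_def vec_eq_iff)

lemma tensor_id_adj: "(tensor_id (adj A) :: complex^('l::finite\<times>'r::finite)^('l\<times>'r)) = adj (tensor_id A)"
  by (auto simp: tensor_id_def adj_def vec_eq_iff)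

lemma tensor_id_mult: "(tensor_id (A ** B) :: complex^('l::finite\<times>'r::finite)^('l\<times>'r)) = tensor_id A ** tensor_id B"
proof -
  have "(\<Sum>q\<in>UNIV. A $ fst p $ fst q * (if snd p = snd q then 1 else 0) *
           (B $ fst q $ fst s * (if snd q = snd s then 1 else 0)))
        = (\<Sum>k\<in>UNIV. A $ fst p $ k * B $ k $ fst s) * (if snd p = snd s then 1 else 0)"
    for p s :: "'l \<times> 'r"
  proof -
    have "(\<Sum>q\<in>UNIV. A $ fst p $ fst q * (if snd p = snd q then 1 else 0) *
           (B $ fst q $ fst s * (if snd q = snd s then 1 else 0)))
        = (\<Sum>k\<in>UNIV. \<Sum>r\<in>UNIV. A $ fst p $ k * (if snd p = r then 1 else 0) *
           (B $ k $ fst s * (if r = snd s then 1 else 0)))"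
      unfolding sum.cartesian_product UNIV_Times_UNIV case_prod_beta by simp
    also have "\<dots> = (\<Sum>k\<in>UNIV. A $ fst p $ k * B $ k $ fst s * (if snd p = snd s then 1 else 0))"
    proof (rule sum.cong[OF refl])
      fix k
      have "(\<Sum>r\<in>UNIV. A $ fst p $ k * (if snd p = r then 1 else 0) *
           (B $ k $ fst s * (if r = snd s then 1 else 0)))
        = (\<Sum>r\<in>UNIV. if snd p = r then A $ fst p $ k * B $ k $ fst s * (if snd p = snd s then 1 else 0) else 0)"
        by (rule sum.cong[OF refl]) auto
      also have "\<dots> = A $ fst p $ k * B $ k $ fst s * (if snd p = snd s then 1 else 0)"
        by simp
      finally show "(\<Sum>r\<in>UNIV. A $ fst p $ k * (if snd p = r then 1 else 0) *
           (B $ k $ fst s * (if r = snd s then 1 else 0)))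
        = A $ fst p $ k * B $ k $ fst s * (if snd p = snd s then 1 else 0)" .
    qed
    also have "\<dots> = (\<Sum>k\<in>UNIV. A $ fst p $ k * B $ k $ fst s) * (if snd p = snd s then 1 else 0)"
      by (simp add: sum_distrib_right)
    finally show ?thesis .
  qed
  then show ?thesis
    by (simp add: tensor_id_def matrix_matrix_mult_def vec_eq_iff)
qed

lemma matrix_add_rdistrib': "((A::complex^'n::finite^'m) + B) ** (C::complex^'k::finite^'n) = A ** C + B ** C"
  by (simp add: matrix_matrix_mult_def vec_eq_iff distrib_right sum.distrib)

theorem mainTheorem8:
  fixes chi :: "complex ^ 'n::finite ^ ('l::finite \<times> 'r::finite)"
  assumes "isometry chi"
  shows "vN_subalgebra (stloc chi)"
  unfolding vN_subalgebra_def
proof (intro conjI ballI allI)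
  have "mat 1 ** adj chi = adj chi ** (tensor_id (mat 1 :: complex^'l^'l) :: complex ^ ('l \<times> 'r) ^ ('l \<times> 'r))"
    unfolding tensor_id_one matrix_mul_lid matrix_mul_rid ..
  moreover have "chi ** mat 1 = (tensor_id (mat 1 :: complex^'l^'l) :: complex ^ ('l \<times> 'r) ^ ('l \<times> 'r)) ** chi"
    unfolding tensor_id_one matrix_mul_lid matrix_mul_rid ..
  ultimately show "mat 1 \<in> stloc chi"
    unfolding stloc_def by blast
next
  fix A B assume a: "A \<in> stloc chi" and b: "B \<in> stloc chi"
  from a obtain At :: "complex^'l^'l" where
    A1: "A ** adj chi = adj chi ** (tensor_id At :: complex ^ ('l \<times> 'r) ^ ('l \<times> 'r))" and
    A2: "chi ** A = tensor_id At ** chi" unfolding stloc_def by blast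
  from b obtain Bt :: "complex^'l^'l" where
    B1: "B ** adj chi = adj chi ** (tensor_id Bt :: complex ^ ('l \<times> 'r) ^ ('l \<times> 'r))" and
    B2: "chi ** B = tensor_id Bt ** chi" unfolding stloc_def by blast
  have "(A + B) ** adj chi = adj chi ** (tensor_id (At + Bt) :: complex ^ ('l \<times> 'r) ^ ('l \<times> 'r))"
    unfolding tensor_id_add matrix_add_ldistrib matrix_add_rdistrib' A1 B1 ..
  moreover have "chi ** (A + B) = (tensor_id (At + Bt) :: complex ^ ('l \<times> 'r) ^ ('l \<times> 'r)) ** chi"
    unfolding tensor_id_add matrix_add_ldistrib matrix_add_rdistrib' A2 B2 ..
  ultimately show "A + B \<in> stloc chi"
    unfolding stloc_def by blast
  have "(A ** B) ** adj chi = A ** (B ** adj chi)" by (rule matrix_mul_assoc[symmetric])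
  also have "\<dots> = (A ** adj chi) ** tensor_id Bt" unfolding B1 by (rule matrix_mul_assoc)
  also have "\<dots> = adj chi ** (tensor_id At ** tensor_id Bt)" unfolding A1 by (rule matrix_mul_assoc[symmetric])
  finally have M1: "(A ** B) ** adj chi = adj chi ** (tensor_id (At ** Bt) :: complex ^ ('l \<times> 'r) ^ ('l \<times> 'r))"
    unfolding tensor_id_mult .
  have "chi ** (A ** B) = (chi ** A) ** B" by (rule matrix_mul_assoc)
  also have "\<dots> = tensor_id At ** (chi ** B)" unfolding A2 by (rule matrix_mul_assoc[symmetric])
  also have "\<dots> = (tensor_id At ** tensor_id Bt) ** chi" unfolding B2 by (rule matrix_mul_assoc)
  finally have M2: "chi ** (A ** B) = (tensor_id (At ** Bt) :: complex ^ ('l \<times> 'r) ^ ('l \<times> 'r)) ** chi"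
    unfolding tensor_id_mult .
  show "A ** B \<in> stloc chi"
    unfolding stloc_def using M1 M2 by blast
next
  fix c A assume a: "A \<in> stloc chi"
  from a obtain At :: "complex^'l^'l" where
    A1: "A ** adj chi = adj chi ** (tensor_id At :: complex ^ ('l \<times> 'r) ^ ('l \<times> 'r))" and
    A2: "chi ** A = tensor_id At ** chi" unfolding stloc_def by blast
  have "cscale c A ** adj chi = adj chi ** (tensor_id (cscale c At) :: complex ^ ('l \<times> 'r) ^ ('l \<times> 'r))"
    unfolding tensor_id_cscale cscale_mult_left cscale_mult_right A1 ..
  moreover have "chi ** cscale c A = (tensor_id (cscale c At) :: complex ^ ('l \<times> 'r) ^ ('l \<times> 'r)) ** chi"
    unfolding tensor_id_cscale cscale_mult_left cscale_mult_right A2 ..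
  ultimately show "cscale c A \<in> stloc chi"
    unfolding stloc_def by blast
next
  fix A assume a: "A \<in> stloc chi"
  from a obtain At :: "complex^'l^'l" where
    A1: "A ** adj chi = adj chi ** (tensor_id At :: complex ^ ('l \<times> 'r) ^ ('l \<times> 'r))" and
    A2: "chi ** A = tensor_id At ** chi" unfolding stloc_def by blast
  have C1: "adj A ** adj chi = adj chi ** (tensor_id (adj At) :: complex ^ ('l \<times> 'r) ^ ('l \<times> 'r))"
    using arg_cong[OF A2, of adj] unfolding adj_mult tensor_id_adj .
  have C2: "chi ** adj A = (tensor_id (adj At) :: complex ^ ('l \<times> 'r) ^ ('l \<times> 'r)) ** chi"
    using arg_cong[OF A1, of adj] unfolding adj_mult adj_adj tensor_id_adj .
  show "adj A \<in> stloc chi"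
    unfolding stloc_def using C1 C2 by blast
qed

end
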